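(* Let $(X,d)$ be a complete ultrametric space. If $f:X\to X$ is an eventually $1$-Lipschitz map, then $f$ has the shadowing property.
   Context: An ultrametric space satisfies $d(x,z)\le\max\{d(x,y),d(y,z)\}$ for all $x,y,z$. A map $f:X\to X$ is eventually Lipschitz $L$ if there is $\varepsilon>0$ such that $d(f(x),f(y))\le L\,d(x,y)$ whenever $d(x,y)<\varepsilon$. Shadowing property: for every $\varepsilon>0$ there is $\delta>0$ such that every sequence $(x_n)_{n\in\mathbb{N}}$ with $d(f(x_n),x_{n+1})<\delta$ for all $n$ admits $x\in X$ with $d(f^n(x),x_n)<\varepsilon$ for all $n\in\mathbb{N}$. *)

theory Defs
  imports "HOL-Analysis.Analysis"
begin

definition ultrametric :: "('a \<Rightarrow> 'a \<Rightarrow> real) \<Rightarrow> bool" where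
  "ultrametric d \<longleftrightarrow> (\<forall>x y z. d x z \<le> max (d x y) (d y z))"

definition eventually_lipschitz ::
  "('a \<Rightarrow> 'a \<Rightarrow> real) \<Rightarrow> real \<Rightarrow> ('a \<Rightarrow> 'a) \<Rightarrow> bool" where
  "eventually_lipschitz d L f \<longleftrightarrow>
     (\<exists>\<epsilon>>0. \<forall>x y. d x y < \<epsilon> \<longrightarrow> d (f x) (f y) \<le> L * d x y)"

definition shadowing :: "('a \<Rightarrow> 'a \<Rightarrow> real) \<Rightarrow> ('a \<Rightarrow> 'a) \<Rightarrow> bool" where
  "shadowing d f \<longleftrightarrow>
     (\<forall>\<epsilon>>0. \<exists>\<delta>>0. \<forall>xs :: nat \<Rightarrow> 'a.
        (\<forall>n. d (f (xs n)) (xs (Suc n)) < \<delta>) \<longrightarrow>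
        (\<exists>x. \<forall>n. d ((f ^^ n) x) (xs n) < \<epsilon>))"

end

theory Submission
  imports Defs
begin

theorem corollary5p3:
  fixes f :: "'a::metric_space \<Rightarrow> 'a"
  assumes "complete (UNIV :: 'a set)"
    and "ultrametric (dist :: 'a \<Rightarrow> 'a \<Rightarrow> real)"
    and "eventually_lipschitz dist 1 f"
  shows "shadowing dist f"
  unfolding shadowing_def
proof (intro allI impI)
  fix \<epsilon> :: real
  assume e: "\<epsilon> > 0"
  obtain \<eta> where eta: "\<eta> > 0" and L: "\<And>x y. dist x y < \<eta> \<Longrightarrow> dist (f x) (f y) \<le> dist x y"
    using assms(3) unfolding eventually_lipschitz_def by auto
  have U: "\<And>x y z::'a. dist x z \<le> max (dist x y) (dist y z)"
    using assms(2) unfolding ultrametric_def by blast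
  show "\<exists>\<delta>>0. \<forall>xs :: nat \<Rightarrow> 'a. (\<forall>n. dist (f (xs n)) (xs (Suc n)) < \<delta>) \<longrightarrow>
        (\<exists>x. \<forall>n. dist ((f ^^ n) x) (xs n) < \<epsilon>)"
  proof (intro exI[of _ "min \<epsilon> \<eta>"] conjI allI impI)
    show "min \<epsilon> \<eta> > 0" using e eta by simp
    fix xs :: "nat \<Rightarrow> 'a"
    assume H: "\<forall>n. dist (f (xs n)) (xs (Suc n)) < min \<epsilon> \<eta>"
    have "dist ((f ^^ n) (xs 0)) (xs n) < min \<epsilon> \<eta>" for n
    proof (induction n)
      case 0
      then show ?case using e eta by simp
    next
      case (Suc n)
      have a: "dist (f ((f ^^ n) (xs 0))) (f (xs n)) < min \<epsilon> \<eta>"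
        using L[of "(f ^^ n) (xs 0)" "xs n"] Suc by simp
      have "dist ((f ^^ Suc n) (xs 0)) (xs (Suc n)) \<le>
            max (dist (f ((f ^^ n) (xs 0))) (f (xs n))) (dist (f (xs n)) (xs (Suc n)))"
        using U by simp
      moreover have "dist (f (xs n)) (xs (Suc n)) < min \<epsilon> \<eta>" using H by blast
      ultimately show ?case using a by (simp only: funpow.simps comp_apply max_less_iff_conj le_less_trans)
    qed
    then show "\<exists>x. \<forall>n. dist ((f ^^ n) x) (xs n) < \<epsilon>" by force
  qed
qed

end
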